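(* Let $\varepsilon\in(0,\frac12]$, let $G$ be an $\varepsilon$-Ramsey-balanced graph, and let $H$ be obtained from $G$ by deleting one vertex. Then $r(G)\leq \frac{4}{\varepsilon}\cdot r(H)$.
   Context: For a graph $F$, the Ramsey number $r(F)$ is the minimum $N$ such that every two-coloring of the edges of $K_N$ contains a monochromatic copy of $F$. The edge density of an $N$-vertex graph is its number of edges divided by $\binom N2$. For $\varepsilon\in(0,\frac12]$, a two-coloring of $E(K_N)$ is $\varepsilon$-balanced if both color classes have edge density at least $\varepsilon$. A Ramsey coloring for $G$ is a two-coloring of $E(K_N)$ with $N=r(G)-1$ containing no monochromatic copy of $G$. The graph $G$ is $\varepsilon$-Ramsey-balanced if there exists a Ramsey coloring for $G$ which is $\varepsilon$-balanced. *)

theory Defs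
  imports Complex_Main
begin

definition simple_graph :: "'a set \<Rightarrow> 'a set set \<Rightarrow> bool" where
  "simple_graph V E \<longleftrightarrow> finite V \<and> (\<forall>e\<in>E. e \<subseteq> V \<and> card e = 2)"

definition KN_edges :: "nat \<Rightarrow> nat set set" where
  "KN_edges N = {e. e \<subseteq> {0..<N} \<and> card e = 2}"

definition has_mono_copy :: "nat \<Rightarrow> (nat set \<Rightarrow> bool) \<Rightarrow> 'a set \<Rightarrow> 'a set set \<Rightarrow> bool" where
  "has_mono_copy N c V E \<longleftrightarrow>
     (\<exists>b f. inj_on f V \<and> f ` V \<subseteq> {0..<N} \<and> (\<forall>e\<in>E. c (f ` e) = b))"

definition ramsey_number :: "'a set \<Rightarrow> 'a set set \<Rightarrow> nat" where
  "ramsey_number V E = (LEAST N. \<forall>c. has_mono_copy N c V E)"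

definition colour_density :: "nat \<Rightarrow> (nat set \<Rightarrow> bool) \<Rightarrow> bool \<Rightarrow> real" where
  "colour_density N c b = real (card {e \<in> KN_edges N. c e = b}) / real (N choose 2)"

definition eps_balanced :: "real \<Rightarrow> nat \<Rightarrow> (nat set \<Rightarrow> bool) \<Rightarrow> bool" where
  "eps_balanced \<epsilon> N c \<longleftrightarrow> colour_density N c True \<ge> \<epsilon> \<and> colour_density N c False \<ge> \<epsilon>"

definition ramsey_colouring :: "nat \<Rightarrow> (nat set \<Rightarrow> bool) \<Rightarrow> 'a set \<Rightarrow> 'a set set \<Rightarrow> bool" where
  "ramsey_colouring N c V E \<longleftrightarrow> N = ramsey_number V E - 1 \<and> \<not> has_mono_copy N c V E"

definition ramsey_balanced :: "real \<Rightarrow> 'a set \<Rightarrow> 'a set set \<Rightarrow> bool" where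
  "ramsey_balanced \<epsilon> V E \<longleftrightarrow>
     (\<exists>c. ramsey_colouring (ramsey_number V E - 1) c V E \<and> eps_balanced \<epsilon> (ramsey_number V E - 1) c)"

definition del_vertex_edges :: "'a set set \<Rightarrow> 'a \<Rightarrow> 'a set set" where
  "del_vertex_edges E v = {e \<in> E. v \<notin> e}"

end

theory Submission
  imports Defs "HOL-Library.Ramsey"
begin

lemma ramsey_exists:
  assumes sg: "simple_graph V E"
  shows "\<exists>M. \<forall>c. has_mono_copy M c V E"
proof -
  obtain r where r: "\<forall>(V'::nat set) (E'::nat set set). finite V' \<and> card V' \<ge> r \<longrightarrow>
    (\<exists>R \<subseteq> V'. card R = card V \<and> clique R E' \<or> card R = card V \<and> indep R E')"
    using ramsey2[of "card V" "card V"] by blast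
  have fV: "finite V" using sg by (simp add: simple_graph_def)
  have "has_mono_copy r c V E" for c
  proof -
    obtain R where R: "R \<subseteq> {0..<r}" "card R = card V" "clique R {e. c e} \<or> indep R {e. c e}"
      using r[rule_format, of "{0..<r}" "{e. c e}"] by auto
    have fR: "finite R" using R(1) finite_subset by blast
    obtain g where g: "bij_betw g V R" using finite_same_card_bij[OF fV fR R(2)[symmetric]] by blast
    have ginj: "inj_on g V" and gim: "g ` V = R" using g by (auto simp: bij_betw_def)
    have key: "\<exists>p q. p \<in> V \<and> q \<in> V \<and> p \<noteq> q \<and> e = {p,q}" if "e \<in> E" for e
    proof -
      have eV: "e \<subseteq> V" "card e = 2" using sg that by (auto simp: simple_graph_def)
      obtain p q where pq: "e = {p,q}" "p \<noteq> q" using card_2_iff[THEN iffD1, OF eV(2)] by blast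
      have "p \<in> V" "q \<in> V" using eV(1) pq(1) by auto
      then show ?thesis using pq by blast
    qed
    show ?thesis
    proof (cases "clique R {e. c e}")
      case True
      have "\<forall>e\<in>E. c (g ` e) = True"
      proof
        fix e assume "e \<in> E"
        then obtain p q where pq: "p \<in> V" "q \<in> V" "p \<noteq> q" "e = {p,q}" using key by blast
        have "g p \<noteq> g q" using ginj pq by (meson inj_onD)
        moreover have "g p \<in> R" "g q \<in> R" using gim pq by auto
        ultimately have "c {g p, g q}" using True by (auto simp: clique_def)
        then show "c (g ` e) = True" using pq by simp
      qed
      then show ?thesis using ginj gim R(1) unfolding has_mono_copy_def by blast
    next
      case False
      then have ind: "indep R {e. c e}" using R(3) by blast
      have "\<forall>e\<in>E. c (g ` e) = False"
      proof
        fix e assume "e \<in> E"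
        then obtain p q where pq: "p \<in> V" "q \<in> V" "p \<noteq> q" "e = {p,q}" using key by blast
        have "g p \<noteq> g q" using ginj pq by (meson inj_onD)
        moreover have "g p \<in> R" "g q \<in> R" using gim pq by auto
        ultimately have "\<not> c {g p, g q}" using ind by (auto simp: indep_def)
        then show "c (g ` e) = False" using pq by simp
      qed
      then show ?thesis using ginj gim R(1) unfolding has_mono_copy_def by blast
    qed
  qed
  then show ?thesis by blast
qed

lemma mono_delete:
  assumes "has_mono_copy M c V E"
  shows "has_mono_copy M c (V - {v}) (del_vertex_edges E v)"
proof -
  obtain b f where f: "inj_on f V" "f ` V \<subseteq> {0..<M}" "\<forall>e\<in>E. c (f ` e) = b"
    using assms by (auto simp: has_mono_copy_def)
  have "inj_on f (V - {v})" using f(1) by (rule inj_on_subset) auto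
  moreover have "f ` (V - {v}) \<subseteq> {0..<M}" using f(2) by auto
  moreover have "\<forall>e\<in>del_vertex_edges E v. c (f ` e) = b" using f(3) by (auto simp: del_vertex_edges_def)
  ultimately show ?thesis unfolding has_mono_copy_def by blast
qed

lemma copy_in_set:
  fixes c :: "nat set \<Rightarrow> bool" and S :: "nat set"
  assumes all: "\<forall>c'. has_mono_copy n c' V' E'" and fS: "finite S" and cS: "card S \<ge> n"
  shows "\<exists>b f. inj_on f V' \<and> f ` V' \<subseteq> S \<and> (\<forall>e\<in>E'. c (f ` e) = b)"
proof -
  obtain g where g: "g ` {0..<n} \<subseteq> S" "inj_on g {0..<n}"
    using card_le_inj[of "{0..<n}" S] fS cS by auto
  obtain b f where f: "inj_on f V'" "f ` V' \<subseteq> {0..<n}" "\<forall>e\<in>E'. c (g ` (f ` e)) = b"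
    using all[rule_format, of "\<lambda>e. c (g ` e)"] by (auto simp: has_mono_copy_def)
  have gi: "inj_on g (f ` V')" using inj_on_subset[OF g(2) f(2)] .
  have "inj_on (g \<circ> f) V'" using comp_inj_on[OF f(1) gi] .
  moreover have "(g \<circ> f) ` V' \<subseteq> S"
  proof -
    have "(g \<circ> f) ` V' = g ` (f ` V')" by (rule image_comp[symmetric])
    also have "\<dots> \<subseteq> g ` {0..<n}" by (rule image_mono[OF f(2)])
    finally show ?thesis using g(1) by (rule subset_trans)
  qed
  moreover have "\<forall>e\<in>E'. c ((g \<circ> f) ` e) = b" using f(3) by (simp add: image_comp)
  ultimately show ?thesis by blast
qed

lemma extend_copy:
  fixes c :: "nat set \<Rightarrow> bool"
  assumes sg: "simple_graph V E" and vV: "v \<in> V"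
    and f: "inj_on f (V - {v})" "f ` (V - {v}) \<subseteq> S" "\<forall>e\<in>del_vertex_edges E v. c (f ` e) = b"
    and S: "S \<subseteq> {0..<N}" and z: "z < N" "z \<notin> S" and zS: "\<forall>s\<in>S. c {z, s} = b"
  shows "has_mono_copy N c V E"
proof -
  define f' where "f' = f(v := z)"
  have V: "insert v (V - {v}) = V" using vV by (rule insert_Diff)
  have eq: "\<forall>u \<in> V - {v}. f' u = f u" by (simp add: f'_def)
  have "inj_on f' (V - {v})" using f(1) inj_on_cong[of "V - {v}" f' f] eq by simp
  moreover have "f' v \<notin> f' ` (V - {v})" using eq z f(2) by (auto simp: f'_def)
  ultimately have "inj_on f' (insert v (V - {v}))" unfolding inj_on_insert by simp
  then have inj: "inj_on f' V" unfolding V .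
  have im: "f' ` V \<subseteq> {0..<N}" using f(2) S z eq by (auto simp: f'_def)
  have "\<forall>e\<in>E. c (f' ` e) = b"
  proof
    fix e assume e: "e \<in> E"
    show "c (f' ` e) = b"
    proof (cases "v \<in> e")
      case False
      have "f' ` e = f ` e" using False by (auto simp: f'_def)
      then show ?thesis using f(3) e False by (simp add: del_vertex_edges_def)
    next
      case True
      have eV: "e \<subseteq> V" "card e = 2" using sg e by (auto simp: simple_graph_def)
      obtain p q where pq: "e = {p,q}" "p \<noteq> q" using card_2_iff[THEN iffD1, OF eV(2)] by blast
      have pqV: "p \<in> V" "q \<in> V" using eV(1) pq(1) by auto
      have "\<exists>u. e = {v, u} \<and> u \<noteq> v \<and> u \<in> V"
      proof (cases "p = v")
        case True then show ?thesis using pq pqV by (intro exI[of _ q]) simp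
      next
        case False
        then have "q = v" using True pq(1) by simp
        moreover have "e = {q,p}" unfolding pq(1) by (rule insert_commute)
        ultimately show ?thesis using pq pqV by (intro exI[of _ p]) simp
      qed
      then obtain u where u: "e = {v, u}" "u \<noteq> v" "u \<in> V" by blast
      have "f' ` e = {z, f u}" using u by (auto simp: f'_def)
      moreover have "f u \<in> S" using f(2) u by auto
      ultimately show ?thesis using zS by simp
    qed
  qed
  then show ?thesis using inj im unfolding has_mono_copy_def by blast
qed

lemma card_filter_sum: "finite B \<Longrightarrow> card {w\<in>B. P w} = (\<Sum>w\<in>B. if P w then 1 else 0::nat)"
  by (simp add: sum.inter_filter[symmetric])

lemma degree_sum:
  fixes c :: "nat set \<Rightarrow> bool"
  shows "2 * card {e \<in> KN_edges N. c e = b} \<le> (\<Sum>x<N. card {y\<in>{0..<N}. y \<noteq> x \<and> c {x,y} = b})"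
proof -
  define P where "P = Sigma {..<N} (\<lambda>x. {y\<in>{0..<N}. y \<noteq> x \<and> c {x,y} = b})"
  have cP: "card P = (\<Sum>x<N. card {y\<in>{0..<N}. y \<noteq> x \<and> c {x,y} = b})"
    unfolding P_def by (simp add: card_SigmaI)
  define P1 where "P1 = {p\<in>P. fst p < snd p}"
  define P2 where "P2 = {p\<in>P. snd p < fst p}"
  have fP: "finite P" unfolding P_def by auto
  have "card P1 + card P2 = card (P1 \<union> P2)"
    using fP by (intro card_Un_disjoint[symmetric]) (auto simp: P1_def P2_def)
  also have "\<dots> \<le> card P" using fP by (intro card_mono) (auto simp: P1_def P2_def)
  finally have s: "card P1 + card P2 \<le> card P" .
  define Er where "Er = {e \<in> KN_edges N. c e = b}"
  have sub: "Er \<subseteq> (\<lambda>(x,y). {x,y}) ` P1 \<and> Er \<subseteq> (\<lambda>(x,y). {x,y}) ` P2"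
  proof (intro conjI subsetI)
    fix e assume "e \<in> Er"
    then have e: "e \<subseteq> {0..<N}" "card e = 2" "c e = b" by (auto simp: Er_def KN_edges_def)
    obtain x y where xy: "e = {x,y}" "x \<noteq> y" using card_2_iff[THEN iffD1, OF e(2)] by blast
    have "\<exists>p q. e = {p,q} \<and> p < q"
    proof (cases "x < y")
      case True then show ?thesis using xy by (intro exI[of _ x] exI[of _ y]) simp
    next
      case False then have "y < x" using xy by simp
      moreover have "e = {y,x}" unfolding xy(1) by (rule insert_commute)
      ultimately show ?thesis by (intro exI[of _ y] exI[of _ x]) simp
    qed
    then obtain p q where pq: "e = {p,q}" "p < q" by blast
    have qp: "{q,p} = e" unfolding pq(1) by (rule insert_commute)
    have pN: "p < N" "q < N" using e(1) pq(1) by auto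
    have cpq: "c {p,q} = b" using e(3) pq(1) by simp
    have cqp: "c {q,p} = b" using e(3) qp by simp
    have m1: "(p,q) \<in> P1" unfolding P1_def P_def using pN cpq pq(2) by simp
    have m2: "(q,p) \<in> P2" unfolding P2_def P_def using pN cqp pq(2) by simp
    show "e \<in> (\<lambda>(x,y). {x,y}) ` P1" using pq(1) m1 by (intro image_eqI[where x="(p,q)"]) simp_all
    show "e \<in> (\<lambda>(x,y). {x,y}) ` P2" using qp m2 by (intro image_eqI[where x="(q,p)"]) simp_all
  qed
  have f1: "finite P1" "finite P2" using fP by (auto simp: P1_def P2_def)
  have "card Er \<le> card ((\<lambda>(x,y). {x,y}) ` P1)" using sub f1 by (intro card_mono) auto
  also have "\<dots> \<le> card P1" by (rule card_image_le[OF f1(1)])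
  finally have "card Er \<le> card P1" .
  moreover have "card Er \<le> card ((\<lambda>(x,y). {x,y}) ` P2)" using sub f1 by (intro card_mono) auto
  moreover have "card ((\<lambda>(x,y). {x,y}) ` P2) \<le> card P2" by (rule card_image_le[OF f1(2)])
  ultimately show ?thesis using s cP unfolding Er_def by linarith
qed

lemma choose2_real: "real (N choose 2) = real N * (real N - 1) / 2"
proof (cases N)
  case 0 then show ?thesis by simp
next
  case (Suc m)
  have "Suc m choose 2 = Suc m * m div 2" by (simp add: choose_two)
  moreover have "even (Suc m * m)" by simp
  ultimately have "2 * (Suc m choose 2) = Suc m * m" by simp
  then have "real (2 * (Suc m choose 2)) = real (Suc m * m)" by (simp only:)
  then have "2 * real (Suc m choose 2) = real (Suc m) * real m" by (simp only: of_nat_mult of_nat_numeral)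
  then show ?thesis using Suc by (simp add: algebra_simps)
qed

lemma high_degree:
  fixes c :: "nat set \<Rightarrow> bool"
  assumes d: "colour_density N c b \<ge> \<epsilon>" and e: "\<epsilon> > 0"
  shows "N \<ge> 2 \<and> (\<exists>x<N. real (card {y\<in>{0..<N}. y \<noteq> x \<and> c {x,y} = b}) \<ge> \<epsilon> * (real N - 1))"
proof -
  have "N choose 2 \<noteq> 0"
  proof
    assume "N choose 2 = 0" then have "colour_density N c b = 0" by (simp add: colour_density_def)
    then show False using d e by simp
  qed
  then have N2: "N \<ge> 2" by (metis binomial_eq_0 not_le)
  have pos: "real (N choose 2) > 0" using \<open>N choose 2 \<noteq> 0\<close> by simp
  have "\<epsilon> * real (N choose 2) \<le> real (card {e \<in> KN_edges N. c e = b})"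
    using d pos by (simp add: colour_density_def pos_le_divide_eq)
  then have "\<epsilon> * real N * (real N - 1) \<le> 2 * real (card {e \<in> KN_edges N. c e = b})"
    by (simp add: choose2_real)
  also have "\<dots> \<le> real (\<Sum>x<N. card {y\<in>{0..<N}. y \<noteq> x \<and> c {x,y} = b})"
  proof -
    have "real (2 * card {e \<in> KN_edges N. c e = b}) \<le> real (\<Sum>x<N. card {y\<in>{0..<N}. y \<noteq> x \<and> c {x,y} = b})"
      using degree_sum[of N c b] by (simp only: of_nat_le_iff)
    then show ?thesis by simp
  qed
  finally have sum: "\<epsilon> * real N * (real N - 1) \<le> (\<Sum>x<N. real (card {y\<in>{0..<N}. y \<noteq> x \<and> c {x,y} = b}))"
    by simp
  show ?thesis
  proof (rule ccontr)
    assume "\<not> ?thesis"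
    then have lt: "\<forall>x\<in>{..<N}. real (card {y\<in>{0..<N}. y \<noteq> x \<and> c {x,y} = b}) < \<epsilon> * (real N - 1)"
      using N2 by auto
    have "(\<Sum>x<N. real (card {y\<in>{0..<N}. y \<noteq> x \<and> c {x,y} = b})) < (\<Sum>x<N. \<epsilon> * (real N - 1))"
    proof (rule sum_strict_mono)
      have "0 \<in> {..<N}" using N2 by simp
      then show "{..<N} \<noteq> {}" by blast
    qed (use lt in auto)
    moreover have "(\<Sum>x<N. \<epsilon> * (real N - 1)) = real N * (\<epsilon> * (real N - 1))" by simp
    moreover have "real N * (\<epsilon> * (real N - 1)) = \<epsilon> * real N * (real N - 1)" by (simp only: ac_simps)
    ultimately show False using sum by linarith
  qed
qed

lemma aux_lin: "0 < (x::real) \<Longrightarrow> P \<le> Q + R - x - y \<Longrightarrow> 2*Q + x \<le> P \<Longrightarrow> 2*R + y \<le> P \<Longrightarrow> 0 \<le> y \<Longrightarrow> False"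
  by linarith

lemma core:
  fixes c :: "nat set \<Rightarrow> bool" and \<epsilon> :: real and N n :: nat
  defines "Nb \<equiv> \<lambda>t b. {y\<in>{0..<N}. y \<noteq> t \<and> c {t,y} = b}"
  assumes K2: "\<And>t z b S. t < N \<Longrightarrow> z < N \<Longrightarrow> S \<subseteq> Nb t b \<Longrightarrow> S \<subseteq> Nb z (\<not> b) \<Longrightarrow> card S < n"
    and n1: "n \<ge> 1"
    and x: "x < N" "real (card (Nb x True)) \<ge> \<epsilon> * (real N - 1)"
    and y: "y < N" "real (card (Nb y False)) \<ge> \<epsilon> * (real N - 1)"
    and eps: "\<epsilon> \<le> 1/2" "\<epsilon> > 0" and big: "\<epsilon> * (real N + 1) > 4 * real n"
  shows False
proof -
  define A where "A = Nb x True"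
  define B where "B = Nb y False"
  have fin: "finite (Nb t b)" for t b by (simp add: Nb_def)
  have sub: "Nb t b \<subseteq> {0..<N}" for t b by (auto simp: Nb_def)
  have AB: "card (A \<inter> B) \<le> 2 * n - 1"
  proof (cases "A \<inter> B = {}")
    case True then show ?thesis by simp
  next
    case False
    then obtain z where z: "z \<in> A \<inter> B" by blast
    have zN: "z < N" using z sub[where t=x and b=True] unfolding A_def by auto
    have s: "A \<inter> B \<subseteq> insert z ((Nb z False \<inter> A) \<union> (Nb z True \<inter> B))"
      using sub by (auto simp: A_def B_def Nb_def)
    have c1: "card (Nb z False \<inter> A) < n"
      by (rule K2[where t=x and z=z and b=True]) (use x zN in \<open>auto simp: A_def\<close>)
    have c2: "card (Nb z True \<inter> B) < n"
      by (rule K2[where t=y and z=z and b=False]) (use y zN in \<open>auto simp: B_def\<close>)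
    have "card (A \<inter> B) \<le> card (insert z ((Nb z False \<inter> A) \<union> (Nb z True \<inter> B)))"
      using fin by (intro card_mono[OF _ s]) auto
    also have "\<dots> \<le> Suc (card ((Nb z False \<inter> A) \<union> (Nb z True \<inter> B)))" by (rule card_insert_le_m1) simp_all
    also have "\<dots> \<le> Suc (card (Nb z False \<inter> A) + card (Nb z True \<inter> B))" using card_Un_le by auto
    finally show ?thesis using c1 c2 by linarith
  qed
  define A' where "A' = A - B"
  define B' where "B' = B - A"
  have fA: "finite A" "finite B" by (simp_all add: A_def B_def fin)
  have cA': "card A' = card A - card (A \<inter> B)" unfolding A'_def
    using fA by (simp add: card_Diff_subset_Int)
  have cB': "card B' = card B - card (A \<inter> B)" unfolding B'_def
    using fA by (simp add: card_Diff_subset_Int Int_commute)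
  have le1: "card (A \<inter> B) \<le> card A" "card (A \<inter> B) \<le> card B" using fA by (simp_all add: card_mono)
  have "\<epsilon> * (real N - 1) > 4 * real n - 1" using big eps by (simp add: algebra_simps) 
  then have ga: "real (card A') > 2 * real n" "real (card B') > 2 * real n"
    using AB le1 cA' cB' x(2) y(2) n1 unfolding A_def B_def by (simp_all add: of_nat_diff)
  define a where "a = card A'"
  define b where "b = card B'"
  have gn: "real a \<ge> 2 * real n + 1" "real b \<ge> 2 * real n + 1"
  proof -
    have "a > 2 * n" "b > 2 * n" using ga unfolding a_def b_def
      by (metis of_nat_less_iff of_nat_mult of_nat_numeral)+
    then show "real a \<ge> 2 * real n + 1" "real b \<ge> 2 * real n + 1" by linarith+
  qed
  have fA': "finite A'" "finite B'" using fA by (simp_all add: A'_def B'_def)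
  have dis: "z \<in> A' \<Longrightarrow> z \<notin> B'" for z by (auto simp: A'_def B'_def)
  have rowZ: "b \<le> card {w\<in>B'. \<not> c {z,w}} + (n - 1)" if zA: "z \<in> A'" for z
  proof -
    have zN: "z < N" using zA sub[where t=x and b=True] unfolding A'_def A_def by auto
    have cz: "card (Nb z True \<inter> B') < n"
      by (rule K2[where t=y and z=z and b=False]) (use y zN in \<open>auto simp: B'_def B_def\<close>)
    have "B' \<subseteq> {w\<in>B'. \<not> c {z,w}} \<union> (Nb z True \<inter> B')"
      using dis[OF zA] sub by (auto simp: B'_def B_def Nb_def)
    then have "b \<le> card ({w\<in>B'. \<not> c {z,w}} \<union> (Nb z True \<inter> B'))"
      unfolding b_def using fA' by (intro card_mono) auto
    also have "\<dots> \<le> card {w\<in>B'. \<not> c {z,w}} + card (Nb z True \<inter> B')" by (rule card_Un_le)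
    finally show ?thesis using cz by linarith
  qed
  have colW: "card {z\<in>A'. \<not> c {z,w}} \<le> n - 1" if wB: "w \<in> B'" for w
  proof -
    have wN: "w < N" using wB sub[where t=y and b=False] unfolding B'_def B_def by auto
    have cw: "card (Nb w False \<inter> A') < n"
      by (rule K2[where t=x and z=w and b=True]) (use x wN in \<open>auto simp: A'_def A_def\<close>)
    have "{z\<in>A'. \<not> c {z,w}} \<subseteq> Nb w False \<inter> A'"
    proof
      fix z assume z: "z \<in> {z\<in>A'. \<not> c {z,w}}"
      have "{w,z} = {z,w}" by blast
      then show "z \<in> Nb w False \<inter> A'" using z dis[of z] wB sub[where t=x and b=True]
        by (auto simp: A'_def A_def Nb_def)
    qed
    then have "card {z\<in>A'. \<not> c {z,w}} \<le> card (Nb w False \<inter> A')"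
      using fA' by (intro card_mono) auto
    then show ?thesis using cw by linarith
  qed
  have swap: "(\<Sum>z\<in>A'. card {w\<in>B'. \<not> c {z,w}}) = (\<Sum>w\<in>B'. card {z\<in>A'. \<not> c {z,w}})"
    using fA' by (simp add: card_filter_sum sum.swap[of _ A' B'])
  have "a * b \<le> (\<Sum>z\<in>A'. card {w\<in>B'. \<not> c {z,w}} + (n - 1))"
    using rowZ sum_mono[of A' "\<lambda>_. b"] by (simp add: a_def)
  also have "\<dots> = (\<Sum>w\<in>B'. card {z\<in>A'. \<not> c {z,w}}) + a * (n - 1)"
    by (simp add: sum.distrib swap a_def)
  also have "\<dots> \<le> b * (n - 1) + a * (n - 1)"
    using colW sum_mono[of B' "\<lambda>w. card {z\<in>A'. \<not> c {z,w}}" "\<lambda>_. n - 1"] by (simp add: b_def)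
  finally have h0: "a * b \<le> b * (n - 1) + a * (n - 1)" .
  then have "real (a * b) \<le> real (b * (n - 1) + a * (n - 1))" by (simp only: of_nat_le_iff)
  then have h1: "real a * real b \<le> (real a + real b) * (real n - 1)"
    unfolding of_nat_add of_nat_mult of_nat_diff[OF n1] of_nat_1 by (simp add: algebra_simps)
  have h2: "real a * real b \<ge> real a * (2 * real n + 1)" 
    using gn by (intro mult_left_mono) auto
  have h3: "real a * real b \<ge> (2 * real n + 1) * real b"
    using gn by (intro mult_right_mono) auto
  have e1: "(real a + real b) * (real n - 1) = real a * real n + real b * real n - real a - real b"
    by (simp add: algebra_simps)
  have e2: "real a * (2 * real n + 1) = 2 * (real a * real n) + real a" by (simp add: algebra_simps)
  have e3: "(2 * real n + 1) * real b = 2 * (real b * real n) + real b" by (simp add: algebra_simps)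
  have a0: "real a > 0" using gn by linarith
  have l1: "real a * real b \<le> real a * real n + real b * real n - real a - real b"
    using h1 unfolding e1 .
  have l2: "2 * (real a * real n) + real a \<le> real a * real b" using h2 unfolding e2 .
  have l3: "2 * (real b * real n) + real b \<le> real a * real b" using h3 unfolding e3 .
  have b0: "real b \<ge> 0" by simp
  show False by (rule aux_lin[OF a0 l1 l2 l3 b0])
qed

theorem proposition1p4:
  fixes V :: "'a set" and E :: "'a set set" and v :: 'a and \<epsilon> :: real
  assumes "simple_graph V E"
    and "v \<in> V"
    and "0 < \<epsilon>" and "\<epsilon> \<le> 1/2"
    and "ramsey_balanced \<epsilon> V E"
  shows "real (ramsey_number V E)
           \<le> 4 / \<epsilon> * real (ramsey_number (V - {v}) (del_vertex_edges E v))"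
proof -
  define N where "N = ramsey_number V E - 1"
  define n where "n = ramsey_number (V - {v}) (del_vertex_edges E v)"
  obtain c where rc: "ramsey_colouring N c V E" and bal: "eps_balanced \<epsilon> N c"
    using assms(5) unfolding ramsey_balanced_def N_def by blast
  have nomono: "\<not> has_mono_copy N c V E" using rc unfolding ramsey_colouring_def by blast
  obtain M where M: "\<forall>c. has_mono_copy M c V E" using ramsey_exists[OF assms(1)] by blast
  have MH: "\<forall>c. has_mono_copy M c (V - {v}) (del_vertex_edges E v)" 
  proof
    fix c show "has_mono_copy M c (V - {v}) (del_vertex_edges E v)"
      using M by (intro mono_delete) blast
  qed
  have allH: "\<forall>c. has_mono_copy n c (V - {v}) (del_vertex_edges E v)"
    unfolding n_def ramsey_number_def by (rule LeastI_ex) (use MH in blast)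
  have dT: "colour_density N c True \<ge> \<epsilon>" and dF: "colour_density N c False \<ge> \<epsilon>"
    using bal by (auto simp: eps_balanced_def)
  obtain x where x: "x < N" "real (card {y\<in>{0..<N}. y \<noteq> x \<and> c {x,y} = True}) \<ge> \<epsilon> * (real N - 1)"
    and N2: "N \<ge> 2"
    using high_degree[OF dT assms(3)] by blast
  obtain y where y: "y < N" "real (card {y'\<in>{0..<N}. y' \<noteq> y \<and> c {y,y'} = False}) \<ge> \<epsilon> * (real N - 1)"
    using high_degree[OF dF assms(3)] by blast
  have K2: "card S < n" if t: "t < N" "z < N" "S \<subseteq> {y\<in>{0..<N}. y \<noteq> t \<and> c {t,y} = b}"
      "S \<subseteq> {y\<in>{0..<N}. y \<noteq> z \<and> c {z,y} = (\<not> b)}" for t z b S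
  proof (rule ccontr)
    assume "\<not> card S < n"
    then have cS: "card S \<ge> n" by simp
    have fS: "finite S" by (rule finite_subset[OF t(3)]) simp
    obtain b' f where f: "inj_on f (V - {v})" "f ` (V - {v}) \<subseteq> S"
      "\<forall>e\<in>del_vertex_edges E v. c (f ` e) = b'"
      using copy_in_set[OF allH fS cS, of c] by blast
    have SN: "S \<subseteq> {0..<N}" by (rule subset_trans[OF t(3)]) auto
    show False
    proof (cases "b' = b")
      case True
      have "has_mono_copy N c V E"
        by (rule extend_copy[OF assms(1,2) f SN t(1)]) (use t(3) True in auto)
      then show False using nomono by blast
    next
      case False
      have "has_mono_copy N c V E"
        by (rule extend_copy[OF assms(1,2) f SN t(2)]) (use t(4) False in auto)
      then show False using nomono by blast
    qed
  qed
  have n1: "n \<ge> 1"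
  proof (rule ccontr)
    assume "\<not> n \<ge> 1"
    then have "n = 0" by simp
    then have "has_mono_copy 0 c (V - {v}) (del_vertex_edges E v)" using allH by simp
    then obtain f :: "'a \<Rightarrow> nat" where "f ` (V - {v}) \<subseteq> {0..<0}"
      unfolding has_mono_copy_def by blast
    then have Vv: "V = {v}" using assms(2) by auto
    have E0: "E = {}"
    proof (rule ccontr)
      assume "E \<noteq> {}"
      then obtain e where e: "e \<in> E" by blast
      then have "e \<subseteq> {v}" "card e = 2" using assms(1) Vv by (auto simp: simple_graph_def)
      moreover have "card e \<le> card {v}" using calculation(1) by (intro card_mono) auto
      ultimately show False by simp
    qed
    have "has_mono_copy N c V E" unfolding has_mono_copy_def Vv E0
      using N2 by (intro exI[of _ True] exI[of _ "\<lambda>_. 0"]) auto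
    then show False using nomono by blast
  qed
  have rG: "ramsey_number V E = N + 1" using N2 unfolding N_def by simp
  show ?thesis
  proof (rule ccontr)
    assume "\<not> ?thesis"
    then have lt: "4 / \<epsilon> * real n < real N + 1" using rG by (simp add: n_def)
    have "4 * real n = 4 / \<epsilon> * real n * \<epsilon>" using assms(3) by (simp add: field_simps)
    also have "\<dots> < (real N + 1) * \<epsilon>" using lt assms(3) by (rule mult_strict_right_mono)
    finally have big: "\<epsilon> * (real N + 1) > 4 * real n" by (simp add: mult.commute)
    show False
      by (rule core[where c=c and N=N and n=n and x=x and y=y and \<epsilon>=\<epsilon>, OF K2 n1 x y assms(4) assms(3) big])
  qed
qed

end
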